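(* Let $m\ge1$, $k\ge 1$, $n\ge 2$ be integers, let $\ell=(\ell_1,\dots,\ell_m)$ with $\ell_i\ge0$, $\sum_i\ell_i=1$, and let $\mathbf{P}=(p_{ij})$ be a symmetric $m\times m$ matrix with entries in $[0,1]$. Let $S\subseteq\{(i,j): i,j\in\{1,\dots,n\},\ i<j\}$ be any fixed set of node pairs, and let $A$ be the event that every pair in $S$ is an edge of the graph. Then $$\Pr_{\mathcal{W}_k(\mathbf{P},\ell)}(A) = \Pr_{\mathcal{W}_1(\mathbf{P},\ell)}(A)^k,$$ where $\Pr_{\mathcal{W}_j(\mathbf{P},\ell)}$ denotes probability for a random graph on nodes $\{1,\dots,n\}$ drawn from $\mathcal{W}_j(\mathbf{P},\ell)$.
   Context: Multifractal network generator (MFNG). Given $m$, $\ell$, $\mathbf{P}$ and a recursion depth $k\ge 1$, the measure $\mathcal{W}_k(\mathbf{P},\ell)$ is the distribution of the undirected random graph on $n$ labelled nodes produced as follows. (1) Partition $[0,1]$ into $m$ consecutive subintervals of lengths $\ell_1,\dots,\ell_m$; recursively partition each subinterval into $m$ pieces with relative lengths $\ell_1,\dots,\ell_m$, for a total of $k$ levels, obtaining $m^k$ intervals indexed by $(i_1,\dots,i_k)\in[m]^k$ with lengths $\prod_{r=1}^k\ell_{i_r}$. (2) Each node $u\in\{1,\dots,n\}$ is placed at an independent uniform point of $[0,1]$ and receives the $k$-tuple of categories $c(u)=(i_1,\dots,i_k)$ of the interval containing it (so $\Pr(c(u)=(i_1,\dots,i_k))=\prod_r\ell_{i_r}$, independently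 across nodes). (3) Conditionally on the categories, independently for each pair $u\ne v$ with $c(u)=(i_1,\dots,i_k)$, $c(v)=(j_1,\dots,j_k)$, the edge $\{u,v\}$ is present with probability $\prod_{r=1}^k p_{i_rj_r}$. *)

theory Defs
  imports "HOL-Probability.Probability"
begin

text \<open>Categories are 0,...,m-1 (the paper's 1,...,m shifted
  by one); nodes are 1,...,n; a graph is represented by the indicator function of its edge
  set on pairs (u,v) with u < v.\<close>

definition level_pmf :: "nat \<Rightarrow> (nat \<Rightarrow> real) \<Rightarrow> nat pmf" where
  "level_pmf m l = embed_pmf (\<lambda>i. if i < m then l i else 0)"

definition cat_pmf :: "nat \<Rightarrow> (nat \<Rightarrow> real) \<Rightarrow> nat \<Rightarrow> (nat \<Rightarrow> nat) pmf" where
  "cat_pmf m l k = Pi_pmf {..<k} 0 (\<lambda>_. level_pmf m l)"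

definition node_pairs :: "nat \<Rightarrow> (nat \<times> nat) set" where
  "node_pairs n = {(u, v). 1 \<le> u \<and> u < v \<and> v \<le> n}"

definition mfng :: "nat \<Rightarrow> (nat \<Rightarrow> real) \<Rightarrow> (nat \<Rightarrow> nat \<Rightarrow> real) \<Rightarrow> nat \<Rightarrow> nat
    \<Rightarrow> (nat \<times> nat \<Rightarrow> bool) pmf" where
  "mfng m l P k n =
     do {
       c \<leftarrow> Pi_pmf {1..n} (\<lambda>_. 0) (\<lambda>_. cat_pmf m l k);
       Pi_pmf (node_pairs n) False
         (\<lambda>(u, v). bernoulli_pmf (\<Prod>r<k. P (c u r) (c v r)))
     }"

end

theory Submission
  imports Defs
begin

lemma pmf_level:
  assumes "\<forall>i<m. l i \<ge> 0" "(\<Sum>i<m. l i) = 1"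
  shows "pmf (level_pmf m l) i = (if i < m then l i else 0)"
  unfolding level_pmf_def
proof (rule pmf_embed_pmf)
  show "\<And>x. 0 \<le> (if x < m then l x else 0)" using assms by auto
  have "(\<integral>\<^sup>+x. ennreal (if x < m then l x else 0) \<partial>count_space UNIV)
      = (\<Sum>x<m. ennreal (if x < m then l x else 0))"
    by (rule nn_integral_count_space') auto
  also have "\<dots> = ennreal (\<Sum>x<m. l x)"
    using assms by (subst sum_ennreal[symmetric]) auto
  finally show "(\<integral>\<^sup>+x. ennreal (if x < m then l x else 0) \<partial>count_space UNIV) = 1"
    using assms by simp
qed

lemma set_level:
  assumes "\<forall>i<m. l i \<ge> 0" "(\<Sum>i<m. l i) = 1"
  shows "set_pmf (level_pmf m l) \<subseteq> {..<m}"
  using pmf_level[OF assms] by (auto simp: set_pmf_eq split: if_splits)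

lemma Pi_pmf_swap:
  assumes "finite N" "finite K"
  shows "Pi_pmf N (\<lambda>_. d) (\<lambda>_. Pi_pmf K d (\<lambda>_. L))
       = map_pmf (\<lambda>F u r. F r u) (Pi_pmf K (\<lambda>_. d) (\<lambda>_. Pi_pmf N d (\<lambda>_. L)))"
proof (rule pmf_eqI)
  fix c :: "'a \<Rightarrow> 'b \<Rightarrow> 'c"
  have inj: "inj (\<lambda>(F::'b \<Rightarrow> 'a \<Rightarrow> 'c) u r. F r u)"
    by (auto simp: inj_def fun_eq_iff)
  have c: "c = (\<lambda>F u r. F r u) (\<lambda>r u. c u r)" by simp
  have r: "pmf (map_pmf (\<lambda>F u r. F r u) (Pi_pmf K (\<lambda>_. d) (\<lambda>_. Pi_pmf N d (\<lambda>_. L)))) c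
      = pmf (Pi_pmf K (\<lambda>_. d) (\<lambda>_. Pi_pmf N d (\<lambda>_. L))) (\<lambda>r u. c u r)"
    by (subst c, subst pmf_map_inj'[OF inj]) simp
  show "pmf (Pi_pmf N (\<lambda>_. d) (\<lambda>_. Pi_pmf K d (\<lambda>_. L))) c =
        pmf (map_pmf (\<lambda>F u r. F r u) (Pi_pmf K (\<lambda>_. d) (\<lambda>_. Pi_pmf N d (\<lambda>_. L)))) c"
  proof (cases "\<forall>u r. (u \<notin> N \<or> r \<notin> K) \<longrightarrow> c u r = d")
    case True
    then show ?thesis unfolding r using assms
      by (simp add: pmf_Pi fun_eq_iff prod.swap[of _ N K])
  next
    case False
    then obtain u r where ur: "u \<notin> N \<or> r \<notin> K" "c u r \<noteq> d" by blast
    have l: "pmf (Pi_pmf N (\<lambda>_. d) (\<lambda>_. Pi_pmf K d (\<lambda>_. L))) c = 0"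
    proof (cases "u \<in> N")
      case True
      then show ?thesis using ur assms
        by (auto simp: pmf_Pi intro!: prod_zero bexI[of _ u])
    next
      case False
      then show ?thesis using ur assms by (auto simp: pmf_Pi fun_eq_iff)
    qed
    have rr: "pmf (Pi_pmf K (\<lambda>_. d) (\<lambda>_. Pi_pmf N d (\<lambda>_. L))) (\<lambda>r u. c u r) = 0"
    proof (cases "r \<in> K")
      case True
      then show ?thesis using ur assms
        by (auto simp: pmf_Pi intro!: prod_zero bexI[of _ r])
    next
      case False
      then show ?thesis using ur assms by (auto simp: pmf_Pi fun_eq_iff)
    qed
    show ?thesis unfolding r l rr ..
  qed
qed

lemma prob_bind_finite:
  assumes "finite (set_pmf M)"
  shows "measure_pmf.prob (bind_pmf M N) X = measure_pmf.expectation M (\<lambda>x. measure_pmf.prob (N x) X)"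
proof -
  have "ennreal (measure_pmf.prob (bind_pmf M N) X) = emeasure (bind_pmf M N) X"
    by (simp add: measure_pmf.emeasure_eq_measure)
  also have "\<dots> = (\<integral>\<^sup>+x. emeasure (N x) X \<partial>M)"
    by (rule emeasure_bind_pmf)
  also have "\<dots> = (\<integral>\<^sup>+x. ennreal (measure_pmf.prob (N x) X) \<partial>M)"
    by (simp add: measure_pmf.emeasure_eq_measure)
  also have "\<dots> = ennreal (measure_pmf.expectation M (\<lambda>x. measure_pmf.prob (N x) X))"
    by (rule nn_integral_eq_integral) (auto intro: integrable_measure_pmf_finite[OF assms])
  finally show ?thesis
    by (subst (asm) ennreal_inj) (auto intro: Bochner_Integration.integral_nonneg)
qed

lemma main:
  fixes m k n :: nat and l :: "nat \<Rightarrow> real" and P :: "nat \<Rightarrow> nat \<Rightarrow> real"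
    and S :: "(nat \<times> nat) set"
  assumes l0: "\<forall>i<m. l i \<ge> 0" and l1: "(\<Sum>i<m. l i) = 1"
    and P01: "\<forall>i<m. \<forall>j<m. 0 \<le> P i j \<and> P i j \<le> 1"
    and S: "S \<subseteq> node_pairs n"
  shows "measure_pmf.prob (mfng m l P k n) {G. \<forall>e\<in>S. G e}
       = (measure_pmf.expectation (Pi_pmf {1..n} 0 (\<lambda>_. level_pmf m l))
            (\<lambda>x. \<Prod>(u,v)\<in>S. P (x u) (x v))) ^ k"
proof -
  define L where "L = level_pmf m l"
  define E where "E = Pi_pmf {1..n} 0 (\<lambda>_. L)"
  define M where "M = Pi_pmf {..<k} (\<lambda>_. 0) (\<lambda>_. E)"
  define g where "g = (\<lambda>x::nat\<Rightarrow>nat. \<Prod>(u,v)\<in>S. P (x u) (x v))"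
  define Q where "Q = (\<lambda>c::nat \<Rightarrow> nat \<Rightarrow> nat. Pi_pmf (node_pairs n) False
         (\<lambda>(u, v). bernoulli_pmf (\<Prod>r<k. P (c u r) (c v r))))"
  define A where "A = {G::nat\<times>nat \<Rightarrow> bool. \<forall>e\<in>S. G e}"
  have finNP: "finite (node_pairs n)"
    by (rule finite_subset[of _ "{1..n} \<times> {1..n}"]) (auto simp: node_pairs_def)
  have finS: "finite S" using finNP S finite_subset by blast
  have setL: "set_pmf L \<subseteq> {..<m}" unfolding L_def by (rule set_level[OF l0 l1])
  have finL: "finite (set_pmf L)" using setL finite_subset by blast
  have setE: "set_pmf E = PiE_dflt {1..n} 0 (\<lambda>_. set_pmf L)"
    unfolding E_def by (simp add: set_Pi_pmf o_def)
  have finE: "finite (set_pmf E)" unfolding setE using finL by auto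
  have setM: "set_pmf M = PiE_dflt {..<k} (\<lambda>_. 0) (\<lambda>_. set_pmf E)"
    unfolding M_def by (simp add: set_Pi_pmf o_def)
  have finM: "finite (set_pmf M)" unfolding setM using finE by auto
  have E_lt: "x u < m" if "x \<in> set_pmf E" "u \<in> {1..n}" for x u
    using that setL unfolding setE PiE_dflt_def by auto
  have D: "Pi_pmf {1..n} (\<lambda>_. 0) (\<lambda>_. cat_pmf m l k) = map_pmf (\<lambda>F u r. F r u) M"
    unfolding cat_pmf_def M_def E_def L_def by (rule Pi_pmf_swap) auto
  have mf: "mfng m l P k n = bind_pmf M (\<lambda>F. Q (\<lambda>u r. F r u))"
    unfolding mfng_def D Q_def by (simp add: bind_map_pmf)
  have key: "measure_pmf.prob (Q (\<lambda>u r. F r u)) A = (\<Prod>r\<in>{..<k}. g (F r))"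
    if F: "F \<in> set_pmf M" for F
  proof -
    have Flt: "F r u < m" if "r < k" "u \<in> {1..n}" for r u
      using F that E_lt unfolding setM PiE_dflt_def by auto
    define p where "p = (\<lambda>(u,v). \<Prod>r<k. P (F r u) (F r v))"
    have p01: "0 \<le> p e \<and> p e \<le> 1" if "e \<in> S" for e
    proof -
      obtain u v where e: "e = (u,v)" by force
      have uv: "u \<in> {1..n}" "v \<in> {1..n}" using that S e by (auto simp: node_pairs_def)
      have "0 \<le> P (F r u) (F r v) \<and> P (F r u) (F r v) \<le> 1" if "r < k" for r
        using P01 Flt[OF that uv(1)] Flt[OF that uv(2)] by blast
      then show ?thesis unfolding e p_def
        by (auto intro!: prod_nonneg prod_le_1)
    qed
    define B where "B = (\<lambda>e. if e \<in> S then {True} else (UNIV::bool set))"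
    have AB: "A = Pi (node_pairs n) B"
      using S unfolding A_def B_def by (auto simp: Pi_def)
    have "measure_pmf.prob (Q (\<lambda>u r. F r u)) A
        = (\<Prod>e\<in>node_pairs n. measure_pmf.prob (bernoulli_pmf (p e)) (B e))"
      unfolding AB Q_def p_def
      by (subst measure_Pi_pmf_Pi[OF finNP]) (simp add: case_prod_unfold)
    also have "\<dots> = (\<Prod>e\<in>node_pairs n. if e \<in> S then p e else 1)"
      using p01 by (intro prod.cong refl) (auto simp: B_def measure_pmf_single)
    also have "\<dots> = (\<Prod>e\<in>S. p e)"
      using prod.inter_restrict[OF finNP, of p S] Int_absorb1[OF S] by simp
    also have "\<dots> = (\<Prod>r\<in>{..<k}. g (F r))"
      unfolding p_def g_def case_prod_unfold by (rule prod.swap)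
    finally show ?thesis .
  qed
  have "measure_pmf.prob (mfng m l P k n) A
      = measure_pmf.expectation M (\<lambda>F. measure_pmf.prob (Q (\<lambda>u r. F r u)) A)"
    unfolding mf by (rule prob_bind_finite[OF finM])
  also have "\<dots> = measure_pmf.expectation M (\<lambda>F. \<Prod>r\<in>{..<k}. g (F r))"
    by (intro Bochner_Integration.integral_cong_AE AE_pmfI) (auto simp: key)
  also have "\<dots> = (\<Prod>r\<in>{..<k}. measure_pmf.expectation E g)"
    unfolding M_def
  proof (rule expectation_prod_Pi_pmf)
    show "integrable (measure_pmf E) g" for x by (rule integrable_measure_pmf_finite[OF finE])
    fix r y assume "y \<in> set_pmf E"
    then have "0 \<le> P (y a) (y b)" if "(a,b) \<in> S" for a b
    proof -
      have "a \<in> {1..n}" "b \<in> {1..n}" using that S by (auto simp: node_pairs_def)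
      then show ?thesis using P01 E_lt[OF \<open>y \<in> set_pmf E\<close>] by blast
    qed
    then show "0 \<le> g y" unfolding g_def
      by (auto intro!: prod_nonneg)
  qed simp
  also have "\<dots> = (measure_pmf.expectation E g) ^ k" by simp
  finally show ?thesis unfolding A_def E_def L_def g_def .
qed

theorem theorem1:
  fixes m k n :: nat and l :: "nat \<Rightarrow> real" and P :: "nat \<Rightarrow> nat \<Rightarrow> real"
    and S :: "(nat \<times> nat) set"
  assumes "m \<ge> 1" and "k \<ge> 1" and "n \<ge> 2"
    and "\<forall>i<m. l i \<ge> 0" and "(\<Sum>i<m. l i) = 1"
    and "\<forall>i<m. \<forall>j<m. P i j = P j i"
    and "\<forall>i<m. \<forall>j<m. 0 \<le> P i j \<and> P i j \<le> 1"
    and "S \<subseteq> node_pairs n"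
  shows "measure_pmf.prob (mfng m l P k n) {G. \<forall>e\<in>S. G e}
       = (measure_pmf.prob (mfng m l P 1 n) {G. \<forall>e\<in>S. G e}) ^ k"
  using main[OF assms(4,5,7,8), of k] main[OF assms(4,5,7,8), of 1] by simp

end
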